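(* Let $G=(V,E)$ be a finite graph and suppose that both $I_1,\dots,I_d$ and $\bar I_1,\dots,\bar I_{\bar d}$ are partitions of $V$ into maximal independent sets characterizing $G$ as a mean valid graph. If $|I_j|\ne|\bar I_k|$, then $I_j\cap\bar I_k=\emptyset$.
   Context: A partition $V=I_1\sqcup\dots\sqcup I_d$ ($d\ge2$) of the vertex set into pairwise disjoint maximal independent sets, ordered with $|I_1|\ge\dots\ge|I_d|$, characterizes $G$ as a mean valid graph if every independent set $I$ of $G$ satisfies $\sum_{s=1}^d|I\cap I_s|/|I_s|\le1$. *)

theory Defs
  imports Complex_Main
begin

definition graph :: "'a set \<Rightarrow> ('a \<Rightarrow> 'a \<Rightarrow> bool) \<Rightarrow> bool" where
  "graph V E \<longleftrightarrow> finite V \<and> (\<forall>u v. E u v \<longrightarrow> u \<in> V \<and> v \<in> V)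
     \<and> (\<forall>u v. E u v \<longrightarrow> E v u) \<and> (\<forall>v. \<not> E v v)"

definition indep_set :: "'a set \<Rightarrow> ('a \<Rightarrow> 'a \<Rightarrow> bool) \<Rightarrow> 'a set \<Rightarrow> bool" where
  "indep_set V E I \<longleftrightarrow> I \<subseteq> V \<and> (\<forall>u\<in>I. \<forall>v\<in>I. \<not> E u v)"

definition max_indep_set :: "'a set \<Rightarrow> ('a \<Rightarrow> 'a \<Rightarrow> bool) \<Rightarrow> 'a set \<Rightarrow> bool" where
  "max_indep_set V E I \<longleftrightarrow> indep_set V E I \<and>
     (\<forall>J. indep_set V E J \<and> I \<subseteq> J \<longrightarrow> J = I)"

definition mis_partition :: "'a set \<Rightarrow> ('a \<Rightarrow> 'a \<Rightarrow> bool) \<Rightarrow> nat \<Rightarrow> (nat \<Rightarrow> 'a set) \<Rightarrow> bool" where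
  "mis_partition V E d P \<longleftrightarrow> d \<ge> 2 \<and>
     (\<forall>s\<in>{1..d}. max_indep_set V E (P s)) \<and>
     (\<forall>s\<in>{1..d}. \<forall>t\<in>{1..d}. s \<noteq> t \<longrightarrow> P s \<inter> P t = {}) \<and>
     (\<Union>s\<in>{1..d}. P s) = V \<and>
     (\<forall>s\<in>{1..d}. \<forall>t\<in>{1..d}. s \<le> t \<longrightarrow> card (P t) \<le> card (P s))"

definition mean_valid_partition :: "'a set \<Rightarrow> ('a \<Rightarrow> 'a \<Rightarrow> bool) \<Rightarrow> nat \<Rightarrow> (nat \<Rightarrow> 'a set) \<Rightarrow> bool" where
  "mean_valid_partition V E d P \<longleftrightarrow> mis_partition V E d P \<and>
     (\<forall>I. indep_set V E I \<longrightarrow>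
        (\<Sum>s=1..d. real (card (I \<inter> P s)) / real (card (P s))) \<le> 1)"

end

theory Submission
  imports Defs
begin

lemma part_sum:
  assumes "finite V" "mis_partition V E d Q" "A \<subseteq> V"
  shows "(\<Sum>k\<in>{1..d}. card (A \<inter> Q k)) = card A"
proof -
  have U: "(\<Union>k\<in>{1..d}. Q k) = V" using assms(2) unfolding mis_partition_def by blast
  have A: "A = (\<Union>k\<in>{1..d}. A \<inter> Q k)" using U assms(3) by blast
  have "card (\<Union>k\<in>{1..d}. A \<inter> Q k) = (\<Sum>k\<in>{1..d}. card (A \<inter> Q k))"
  proof (rule card_UN_disjoint)
    show "\<forall>i\<in>{1..d}. finite (A \<inter> Q i)" using assms(1,3) finite_subset by blast
    show "\<forall>i\<in>{1..d}. \<forall>j\<in>{1..d}. i \<noteq> j \<longrightarrow> A \<inter> Q i \<inter> (A \<inter> Q j) = {}"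
      using assms(2) unfolding mis_partition_def by blast
  qed simp
  then show ?thesis using A by simp
qed

lemma mis_nonempty:
  assumes "graph V E" "max_indep_set V E I" "x \<in> V"
  shows "I \<noteq> {}"
proof
  assume "I = {}"
  have "indep_set V E {x}" using assms unfolding graph_def indep_set_def by auto
  then have "{x} = I" using assms(2) \<open>I = {}\<close> unfolding max_indep_set_def by blast
  then show False using \<open>I = {}\<close> by simp
qed

theorem lemma10:
  fixes V :: "'a set" and E :: "'a \<Rightarrow> 'a \<Rightarrow> bool"
    and d d' :: nat and P Q :: "nat \<Rightarrow> 'a set" and j k :: nat
  assumes "graph V E"
    and "mean_valid_partition V E d P"
    and "mean_valid_partition V E d' Q"
    and "j \<in> {1..d}" and "k \<in> {1..d'}"
    and "card (P j) \<noteq> card (Q k)"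
  shows "P j \<inter> Q k = {}"
proof (rule ccontr)
  assume "P j \<inter> Q k \<noteq> {}"
  then obtain x where x: "x \<in> P j \<inter> Q k" by blast
  define S where "S = {1..d}"
  define K where "K = {1..d'}"
  define p where "p s = real (card (P s))" for s
  define q where "q t = real (card (Q t))" for t
  define a where "a s t = real (card (P s \<inter> Q t))" for s t
  have fin: "finite V" using assms(1) unfolding graph_def by simp
  have mP: "mis_partition V E d P" and mQ: "mis_partition V E d' Q"
    using assms(2,3) unfolding mean_valid_partition_def by auto
  have PV: "\<And>s. s \<in> S \<Longrightarrow> P s \<subseteq> V" using mP unfolding S_def mis_partition_def by blast
  have QV: "\<And>t. t \<in> K \<Longrightarrow> Q t \<subseteq> V" using mQ unfolding K_def mis_partition_def by blast
  have xV: "x \<in> V" using x PV assms(4) unfolding S_def by blast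
  have pp: "p s > 0" if "s \<in> S" for s
  proof -
    have "max_indep_set V E (P s)" using mP that unfolding S_def mis_partition_def by blast
    then have "P s \<noteq> {}" by (rule mis_nonempty[OF assms(1) _ xV])
    moreover have "finite (P s)" by (rule finite_subset[OF PV[OF that] fin])
    ultimately show ?thesis unfolding p_def by (simp add: card_gt_0_iff)
  qed
  have qp: "q t > 0" if "t \<in> K" for t
  proof -
    have "max_indep_set V E (Q t)" using mQ that unfolding K_def mis_partition_def by blast
    then have "Q t \<noteq> {}" by (rule mis_nonempty[OF assms(1) _ xV])
    moreover have "finite (Q t)" by (rule finite_subset[OF QV[OF that] fin])
    ultimately show ?thesis unfolding q_def by (simp add: card_gt_0_iff)
  qed
  have rows: "(\<Sum>t\<in>K. a s t) = p s" if "s \<in> S" for s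
  proof -
    have "(\<Sum>t\<in>K. card (P s \<inter> Q t)) = card (P s)"
      using part_sum[OF fin mQ PV[OF that]] unfolding K_def .
    from arg_cong[OF this, of real] show ?thesis unfolding a_def p_def by simp
  qed
  have cols: "(\<Sum>s\<in>S. a s t) = q t" if "t \<in> K" for t
  proof -
    have "(\<Sum>s\<in>S. card (Q t \<inter> P s)) = card (Q t)"
      using part_sum[OF fin mP QV[OF that]] unfolding S_def .
    from arg_cong[OF this, of real] show ?thesis unfolding a_def q_def by (simp add: Int_commute)
  qed
  have inP: "(\<Sum>s\<in>S. a s t / p s) \<le> 1" if "t \<in> K" for t
  proof -
    have "indep_set V E (Q t)" using mQ that unfolding K_def mis_partition_def max_indep_set_def by blast
    then have "(\<Sum>s=1..d. real (card (Q t \<inter> P s)) / real (card (P s))) \<le> 1"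
      using assms(2) unfolding mean_valid_partition_def by blast
    then show ?thesis unfolding a_def p_def S_def by (simp add: Int_commute)
  qed
  have inQ: "(\<Sum>t\<in>K. a s t / q t) \<le> 1" if "s \<in> S" for s
  proof -
    have "indep_set V E (P s)" using mP that unfolding S_def mis_partition_def max_indep_set_def by blast
    then have "(\<Sum>t=1..d'. real (card (P s \<inter> Q t)) / real (card (Q t))) \<le> 1"
      using assms(3) unfolding mean_valid_partition_def by blast
    then show ?thesis unfolding a_def q_def K_def by simp
  qed
  have a0: "a s t \<ge> 0" for s t unfolding a_def by simp
  define f where "f s t = a s t * (p s - q t)^2 / (p s * q t)" for s t
  have fnn: "f s t \<ge> 0" if "s \<in> S" "t \<in> K" for s t
    unfolding f_def using pp[OF that(1)] qp[OF that(2)] a0[of s t] by simp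
  have fexp: "f s t = a s t * p s / q t + a s t * q t / p s - 2 * a s t" if "s \<in> S" "t \<in> K" for s t
    using pp[OF that(1)] qp[OF that(2)] unfolding f_def
    by (simp add: field_simps power2_eq_square)
  have e1: "(\<Sum>s\<in>S. \<Sum>t\<in>K. a s t * p s / q t) \<le> (\<Sum>s\<in>S. \<Sum>t\<in>K. a s t)"
  proof -
    have "(\<Sum>s\<in>S. \<Sum>t\<in>K. a s t * p s / q t) = (\<Sum>s\<in>S. p s * (\<Sum>t\<in>K. a s t / q t))"
      by (simp add: sum_distrib_left mult.commute)
    also have "\<dots> \<le> (\<Sum>s\<in>S. p s)"
      by (rule sum_mono) (use pp inQ in \<open>auto intro: mult_left_le\<close>)
    also have "\<dots> = (\<Sum>s\<in>S. \<Sum>t\<in>K. a s t)" using rows by simp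
    finally show ?thesis .
  qed
  have e2: "(\<Sum>s\<in>S. \<Sum>t\<in>K. a s t * q t / p s) \<le> (\<Sum>s\<in>S. \<Sum>t\<in>K. a s t)"
  proof -
    have "(\<Sum>s\<in>S. \<Sum>t\<in>K. a s t * q t / p s) = (\<Sum>t\<in>K. \<Sum>s\<in>S. a s t * q t / p s)"
      by (rule sum.swap)
    also have "\<dots> = (\<Sum>t\<in>K. q t * (\<Sum>s\<in>S. a s t / p s))"
      by (simp add: sum_distrib_left mult.commute)
    also have "\<dots> \<le> (\<Sum>t\<in>K. q t)"
      by (rule sum_mono) (use qp inP in \<open>auto intro: mult_left_le\<close>)
    also have "\<dots> = (\<Sum>t\<in>K. \<Sum>s\<in>S. a s t)" using cols by simp
    also have "\<dots> = (\<Sum>s\<in>S. \<Sum>t\<in>K. a s t)" by (rule sum.swap)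
    finally show ?thesis .
  qed
  have "(\<Sum>s\<in>S. \<Sum>t\<in>K. f s t) = (\<Sum>s\<in>S. \<Sum>t\<in>K. a s t * p s / q t + a s t * q t / p s - 2 * a s t)"
    using fexp by simp
  also have "\<dots> = (\<Sum>s\<in>S. \<Sum>t\<in>K. a s t * p s / q t) + (\<Sum>s\<in>S. \<Sum>t\<in>K. a s t * q t / p s)
      - 2 * (\<Sum>s\<in>S. \<Sum>t\<in>K. a s t)"
    by (simp add: sum.distrib sum_subtractf sum_distrib_left)
  also have "\<dots> \<le> 0" using e1 e2 by simp
  finally have le0: "(\<Sum>s\<in>S. \<Sum>t\<in>K. f s t) \<le> 0" .
  have inner_nn: "\<forall>s\<in>S. 0 \<le> (\<Sum>t\<in>K. f s t)" using fnn by (simp add: sum_nonneg)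
  have "(\<Sum>s\<in>S. \<Sum>t\<in>K. f s t) = 0" using le0 inner_nn sum_nonneg[of S "\<lambda>s. \<Sum>t\<in>K. f s t"] by (meson antisym)
  then have "\<forall>s\<in>S. (\<Sum>t\<in>K. f s t) = 0"
    using sum_nonneg_eq_0_iff[of S "\<lambda>s. \<Sum>t\<in>K. f s t"] inner_nn unfolding S_def by simp
  then have "(\<Sum>t\<in>K. f j t) = 0" using assms(4) unfolding S_def by blast
  then have fjk: "f j k = 0"
    using sum_nonneg_eq_0_iff[of K "f j"] fnn assms(4,5) unfolding S_def K_def by simp
  have "finite (P j \<inter> Q k)" using PV[of j] assms(4) fin unfolding S_def by (meson finite_Int finite_subset)
  then have "a j k > 0" using x unfolding a_def by (simp add: card_gt_0_iff) blast
  moreover have "p j > 0" "q k > 0" using pp qp assms(4,5) unfolding S_def K_def by auto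
  ultimately have "(p j - q k)^2 = 0" using fjk unfolding f_def by simp
  then have "p j = q k" by simp
  then show False using assms(6) unfolding p_def q_def by simp
qed

end
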